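(* Let $f$ be an L-additive arithmetic function whose associated completely multiplicative function $h_f$ is nonzero-valued, let $\Lambda_f$ be its generalized von Mangoldt function, and let $g$ be a completely additive arithmetic function. Then for every positive integer $n$, $$(\Lambda_f\ast g)(n)=\frac{f(n)g(n)}{h_f(n)}-(1\ast g\Lambda_f)(n).$$
   Context: An arithmetic function $f:\mathbb{N}\to\mathbb{C}$ is L-additive if there is a completely multiplicative function $h_f$ such that $f(mn)=f(m)h_f(n)+f(n)h_f(m)$ for all positive integers $m,n$; such an $h_f$ is fixed. $\Lambda_f(n)=\frac{f(p)}{h_f(p)}$ if $n=p^k$ for some prime $p$ and integer $k\geq1$, and $0$ otherwise. $g$ completely additive means $g(mn)=g(m)+g(n)$ for all $m,n$. $1$ is the constant function $1$, $\ast$ is Dirichlet convolution $(F\ast G)(n)=\sum_{d\mid n}F(d)G(n/d)$, and $g\Lambda_f$ is the pointwise product. *)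

theory Defs
  imports Complex_Main "HOL-Computational_Algebra.Primes"
begin

text \<open>Arithmetic functions are modelled as functions nat => complex; only their
values at positive integers matter.\<close>

definition completely_multiplicative :: "(nat \<Rightarrow> complex) \<Rightarrow> bool" where
  "completely_multiplicative h \<longleftrightarrow> h 1 = 1 \<and> (\<forall>m n. m > 0 \<longrightarrow> n > 0 \<longrightarrow> h (m * n) = h m * h n)"

definition completely_additive :: "(nat \<Rightarrow> complex) \<Rightarrow> bool" where
  "completely_additive g \<longleftrightarrow> (\<forall>m n. m > 0 \<longrightarrow> n > 0 \<longrightarrow> g (m * n) = g m + g n)"

definition L_additive_wrt :: "(nat \<Rightarrow> complex) \<Rightarrow> (nat \<Rightarrow> complex) \<Rightarrow> bool" where
  "L_additive_wrt f h \<longleftrightarrow> completely_multiplicative h \<and>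
     (\<forall>m n. m > 0 \<longrightarrow> n > 0 \<longrightarrow> f (m * n) = f m * h n + f n * h m)"

definition gen_mangoldt :: "(nat \<Rightarrow> complex) \<Rightarrow> (nat \<Rightarrow> complex) \<Rightarrow> nat \<Rightarrow> complex" where
  "gen_mangoldt f h n =
     (if \<exists>p k. prime p \<and> k \<ge> 1 \<and> n = p ^ k
      then f (THE p. prime p \<and> (\<exists>k. k \<ge> 1 \<and> n = p ^ k)) / h (THE p. prime p \<and> (\<exists>k. k \<ge> 1 \<and> n = p ^ k))
      else 0)"

definition dirichlet_conv :: "(nat \<Rightarrow> complex) \<Rightarrow> (nat \<Rightarrow> complex) \<Rightarrow> nat \<Rightarrow> complex" where
  "dirichlet_conv F G n = (\<Sum>d | d dvd n. F d * G (n div d))"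

end

theory Submission
  imports Defs
begin

lemma gm_pp:
  assumes "prime (p::nat)" "k \<ge> 1"
  shows "gen_mangoldt f h (p ^ k) = f p / h p"
proof -
  have ex: "\<exists>p' k'. prime p' \<and> k' \<ge> 1 \<and> p ^ k = p' ^ k'" using assms by blast
  have the: "(THE q. prime q \<and> (\<exists>j. j \<ge> 1 \<and> p ^ k = q ^ j)) = p"
  proof (rule the_equality)
    show "prime p \<and> (\<exists>j. j \<ge> 1 \<and> p ^ k = p ^ j)" using assms by blast
  next
    fix q assume "prime q \<and> (\<exists>j. j \<ge> 1 \<and> p ^ k = q ^ j)"
    then obtain j where "prime q" "j \<ge> 1" "p ^ k = q ^ j" by blast
    then show "q = p" using prime_power_inj'(1)[of p q k j] assms by auto
  qed
  show ?thesis unfolding gen_mangoldt_def using ex the by simp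
qed

lemma gm_zero:
  assumes "\<not> (\<exists>p k. prime (p::nat) \<and> k \<ge> 1 \<and> d = p ^ k)"
  shows "gen_mangoldt f h d = 0"
  using assms unfolding gen_mangoldt_def by (simp only: if_False)

lemma sum_gm:
  fixes f h :: "nat \<Rightarrow> complex"
  assumes add: "\<And>a b. a > 0 \<Longrightarrow> b > 0 \<Longrightarrow> f (a*b) / h (a*b) = f a / h a + f b / h b"
  shows "n > 0 \<Longrightarrow> (\<Sum>d | d dvd n. gen_mangoldt f h d) = f n / h n"
proof (induction n rule: less_induct)
  case (less n)
  show ?case
  proof (cases "n = 1")
    case True
    have "f 1 / h 1 = f 1 / h 1 + f 1 / h 1" using add[of 1 1] by simp
    then have "f 1 / h 1 = 0" by (metis add_cancel_right_right)
    moreover have "gen_mangoldt f h 1 = 0"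
    proof (rule gm_zero, clarify)
      fix p k assume "prime (p::nat)" "1 \<le> k" "1 = p ^ k"
      then have "p ^ k = Suc 0" by simp
      then have "p = 1" using \<open>1 \<le> k\<close> by (simp add: nat_power_eq_Suc_0_iff)
      then show False using \<open>prime p\<close> by simp
    qed
    ultimately show ?thesis using True by auto
  next
    case False
    then have "n > 1" using less.prems by simp
    then obtain p where p: "prime p" "p dvd n" using prime_factor_nat[of n] by auto
    then obtain m where nm: "n = p * m" by blast
    have m0: "m > 0" using nm less.prems by (cases m) auto
    have p1: "p > 1" using p prime_gt_1_nat by blast
    have mlt: "m < n" using nm p1 m0 by simp
    define v where "v = multiplicity p n"
    have vm: "v = Suc (multiplicity p m)" unfolding v_def nm
      using multiplicity_times_same[of m p] p1 m0 by simp
    have fin: "finite {d. d dvd n}" using less.prems by simp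
    have sub: "{d. d dvd m} \<subseteq> {d. d dvd n}" using nm by auto
    have D2: "(\<Sum>d\<in>{d. d dvd n} - {d. d dvd m}. gen_mangoldt f h d) = f p / h p"
    proof -
      have pv_in: "p ^ v \<in> {d. d dvd n} - {d. d dvd m}"
      proof -
        have "p ^ v dvd n" unfolding v_def by (simp add: multiplicity_dvd)
        moreover have "\<not> p ^ v dvd m"
        proof -
          have "\<not> v \<le> multiplicity p m" using vm by simp
          then show ?thesis using power_dvd_iff_le_multiplicity[of m p v] m0 p1 by simp
        qed
        ultimately show ?thesis by simp
      qed
      have "(\<Sum>d\<in>{d. d dvd n} - {d. d dvd m}. gen_mangoldt f h d)
            = (\<Sum>d\<in>{p ^ v}. gen_mangoldt f h d)"
      proof (rule sum.mono_neutral_right)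
        show "finite ({d. d dvd n} - {d. d dvd m})" using fin by simp
        show "{p ^ v} \<subseteq> {d. d dvd n} - {d. d dvd m}" using pv_in by simp
        show "\<forall>i\<in>{d. d dvd n} - {d. d dvd m} - {p ^ v}. gen_mangoldt f h i = 0"
        proof
          fix d assume d: "d \<in> {d. d dvd n} - {d. d dvd m} - {p ^ v}"
          show "gen_mangoldt f h d = 0"
          proof (rule gm_zero, rule notI)
            assume "\<exists>q k. prime q \<and> k \<ge> 1 \<and> d = q ^ k"
            then obtain q k where qk: "prime q" "k \<ge> 1" "d = q ^ k" by blast
            have dn: "d dvd p * m" "\<not> d dvd m" "d \<noteq> p ^ v" using d nm by auto
            have "q = p"
            proof (rule ccontr)
              assume "q \<noteq> p"
              then have "coprime d p" using qk p
                by (simp add: primes_coprime)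
              then have "d dvd m" using dn(1) coprime_dvd_mult_right_iff by blast
              then show False using dn by simp
            qed
            then have "k \<le> v" using dn(1) qk nm unfolding v_def
              using power_dvd_iff_le_multiplicity[of n p k] less.prems p1 by simp
            moreover have "\<not> k \<le> multiplicity p m" using dn(2) qk \<open>q = p\<close>
              using power_dvd_iff_le_multiplicity[of m p k] m0 p1 by simp
            ultimately have "k = v" using vm by simp
            then show False using dn qk \<open>q = p\<close> by simp
          qed
        qed
      qed
      also have "\<dots> = f p / h p"
      proof -
        have "v \<ge> 1" using vm by simp
        then show ?thesis using gm_pp[OF p(1)] by simp
      qed
      finally show ?thesis .
    qed
    have "(\<Sum>d | d dvd n. gen_mangoldt f h d)
          = (\<Sum>d | d dvd m. gen_mangoldt f h d) + (\<Sum>d\<in>{d. d dvd n} - {d. d dvd m}. gen_mangoldt f h d)"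
      using sum.subset_diff[OF sub fin, of "gen_mangoldt f h"] by (simp add: add.commute)
    also have "\<dots> = f m / h m + f p / h p" using less.IH[OF mlt m0] D2 by simp
    also have "\<dots> = f n / h n" using add[of p m] p1 m0 nm by simp
    finally show ?thesis .
  qed
qed


lemma divisor_sum_flip:
  assumes "(n::nat) > 0"
  shows "(\<Sum>d | d dvd n. G (n div d)) = (\<Sum>d | d dvd n. (G d :: complex))"
  by (rule sum.reindex_bij_witness[where i="\<lambda>d. n div d" and j="\<lambda>d. n div d"])
     (use assms in \<open>auto simp: div_div_eq_right dvd_div_eq_mult\<close>)

theorem theorem2p4:
  fixes f h g :: "nat \<Rightarrow> complex" and n :: nat
  assumes "L_additive_wrt f h"
    and "\<And>m. m > 0 \<Longrightarrow> h m \<noteq> 0"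
    and "completely_additive g"
    and "n > 0"
  shows "dirichlet_conv (gen_mangoldt f h) g n
         = f n * g n / h n - dirichlet_conv (\<lambda>_. 1) (\<lambda>k. g k * gen_mangoldt f h k) n"
proof -
  have cm: "completely_multiplicative h" and fm: "\<And>a b. a > 0 \<Longrightarrow> b > 0 \<Longrightarrow> f (a*b) = f a * h b + f b * h a"
    using assms(1) unfolding L_additive_wrt_def by auto
  have hm: "\<And>a b. a > 0 \<Longrightarrow> b > 0 \<Longrightarrow> h (a*b) = h a * h b"
    using cm unfolding completely_multiplicative_def by auto
  have add: "\<And>a b. a > 0 \<Longrightarrow> b > 0 \<Longrightarrow> f (a*b) / h (a*b) = f a / h a + f b / h b"
  proof -
    fix a b :: nat assume ab: "a > 0" "b > 0"
    have "h a \<noteq> 0" "h b \<noteq> 0" using assms(2) ab by auto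
    then show "f (a*b) / h (a*b) = f a / h a + f b / h b"
      using fm[OF ab] hm[OF ab] by (simp add: field_simps)
  qed
  have S: "(\<Sum>d | d dvd n. gen_mangoldt f h d) = f n / h n"
    using sum_gm[OF add assms(4)] by blast
  have gadd: "\<And>d. d \<in> {d. d dvd n} \<Longrightarrow> g (n div d) + g d = g n"
  proof -
    fix d assume "d \<in> {d. d dvd n}"
    then have d: "d dvd n" by simp
    then have "d > 0" "n div d > 0" using assms(4) by (auto intro: Nat.gr0I simp: dvd_div_eq_0_iff)
    moreover have "n = (n div d) * d" using d by simp
    ultimately show "g (n div d) + g d = g n"
      using assms(3) unfolding completely_additive_def by metis
  qed
  have "dirichlet_conv (gen_mangoldt f h) g n + dirichlet_conv (\<lambda>_. 1) (\<lambda>k. g k * gen_mangoldt f h k) n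
      = (\<Sum>d | d dvd n. gen_mangoldt f h d * g (n div d)) + (\<Sum>d | d dvd n. g d * gen_mangoldt f h d)"
    unfolding dirichlet_conv_def using divisor_sum_flip[OF assms(4), of "\<lambda>k. g k * gen_mangoldt f h k"]
    by simp
  also have "\<dots> = (\<Sum>d | d dvd n. gen_mangoldt f h d * (g (n div d) + g d))"
    by (simp add: sum.distrib algebra_simps)
  also have "\<dots> = (\<Sum>d | d dvd n. gen_mangoldt f h d * g n)"
    by (rule sum.cong) (auto simp: gadd)
  also have "\<dots> = (\<Sum>d | d dvd n. gen_mangoldt f h d) * g n"
    by (simp add: sum_distrib_right)
  also have "\<dots> = f n * g n / h n"
    using S by simp
  finally show ?thesis by (simp add: eq_diff_eq)
qed

end
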